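(* Let $G$ be a simple undirected graph on $\{1,\dots,n\}$ ($n\ge2$) with adjacency $g_{ij}$ ($g_{ii}=0$) and $m$ edges. Suppose the potential outcomes are $Y_i(\mathbf z)=\alpha_i+\beta_iz_i+\gamma\sum_jg_{ij}z_j$ for constants $\alpha_i,\beta_i,\gamma$. Under a restricted Bernoulli design with parameter $p\in(0,1)$, the estimator $$\hat\beta_{naive}=\frac{\sum_i Y_i^{obs}Z_i}{\sum_i Z_i}-\frac{\sum_i Y_i^{obs}(1-Z_i)}{\sum_i(1-Z_i)}$$ satisfies $\mathbb E[\hat\beta_{naive}]-\mathrm{DTE}=-\gamma\frac{2m}{n(n-1)}$, where $\mathrm{DTE}=\frac1n\sum_i\beta_i$.
   Context: Restricted Bernoulli design with parameter $p$: $P(\mathbf Z=\mathbf z)=p^{|\mathbf z|}(1-p)^{n-|\mathbf z|}/(1-p^n-(1-p)^n)$ if $0<|\mathbf z|<n$ and $0$ otherwise, where $|\mathbf z|=\sum_iz_i$. $Y_i^{obs}=Y_i(\mathbf Z)$. DTE is the average over units of the outcome when the unit is treated and no neighbor is treated minus the outcome when no unit is treated. *)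

theory Defs
  imports Complex_Main
begin

text \<open>Units are 1..n. A treatment assignment is identified with the set S of treated
units; the 0/1 vector is z = indicator of S, i.e. z_i = (if i \<in> S then 1 else 0).\<close>

definition zvec :: "nat set \<Rightarrow> nat \<Rightarrow> real" where
  "zvec S = (\<lambda>i. if i \<in> S then 1 else 0)"

definition rb_prob :: "nat \<Rightarrow> real \<Rightarrow> nat set \<Rightarrow> real" where
  "rb_prob n p S =
     (if S \<subseteq> {1..n} \<and> 0 < card S \<and> card S < n
      then p ^ card S * (1 - p) ^ (n - card S) / (1 - p ^ n - (1 - p) ^ n)
      else 0)"

definition rb_expect :: "nat \<Rightarrow> real \<Rightarrow> (nat set \<Rightarrow> real) \<Rightarrow> real" where
  "rb_expect n p T = (\<Sum>S\<in>Pow {1..n}. rb_prob n p S * T S)"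

definition Yobs :: "(nat \<Rightarrow> (nat \<Rightarrow> real) \<Rightarrow> real) \<Rightarrow> nat set \<Rightarrow> nat \<Rightarrow> real" where
  "Yobs Y S i = Y i (zvec S)"

definition beta_naive :: "nat \<Rightarrow> (nat \<Rightarrow> (nat \<Rightarrow> real) \<Rightarrow> real) \<Rightarrow> nat set \<Rightarrow> real" where
  "beta_naive n Y S =
     (\<Sum>i=1..n. Yobs Y S i * zvec S i) / (\<Sum>i=1..n. zvec S i)
   - (\<Sum>i=1..n. Yobs Y S i * (1 - zvec S i)) / (\<Sum>i=1..n. (1 - zvec S i))"

definition DTE :: "nat \<Rightarrow> (nat \<Rightarrow> (nat \<Rightarrow> real) \<Rightarrow> real) \<Rightarrow> real" where
  "DTE n Y = (1 / real n) * (\<Sum>i=1..n. Y i (zvec {i}) - Y i (zvec {}))"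

definition simple_graph_on :: "nat \<Rightarrow> (nat \<Rightarrow> nat \<Rightarrow> bool) \<Rightarrow> bool" where
  "simple_graph_on n g \<longleftrightarrow> (\<forall>i j. g i j \<longrightarrow> g j i) \<and> (\<forall>i. \<not> g i i)
      \<and> (\<forall>i j. g i j \<longrightarrow> i \<in> {1..n} \<and> j \<in> {1..n})"

definition num_edges :: "nat \<Rightarrow> (nat \<Rightarrow> nat \<Rightarrow> bool) \<Rightarrow> nat" where
  "num_edges n g = card {(i, j). i \<in> {1..n} \<and> j \<in> {1..n} \<and> i < j \<and> g i j}"

definition adj :: "(nat \<Rightarrow> nat \<Rightarrow> bool) \<Rightarrow> nat \<Rightarrow> nat \<Rightarrow> real" where
  "adj g i j = (if g i j then 1 else 0)"

end

theory Submission
  imports Defs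
begin

lemma count_gen:
  assumes fU: "finite U" and AU: "A \<subseteq> U" and BU: "B \<subseteq> U" and AB: "A \<inter> B = {}"
    and kA: "card A \<le> k"
  shows "card {S. S \<subseteq> U \<and> card S = k \<and> A \<subseteq> S \<and> S \<inter> B = {}}
         = (card U - card A - card B) choose (k - card A)"
proof -
  have fA: "finite A" using fU AU finite_subset by blast
  have fB: "finite B" using fU BU finite_subset by blast
  let ?T = "{T. T \<subseteq> U - A - B \<and> card T = k - card A}"
  have eq: "{S. S \<subseteq> U \<and> card S = k \<and> A \<subseteq> S \<and> S \<inter> B = {}} = (\<lambda>T. T \<union> A) ` ?T"
  proof (intro set_eqI iffI)
    fix S assume "S \<in> {S. S \<subseteq> U \<and> card S = k \<and> A \<subseteq> S \<and> S \<inter> B = {}}"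
    hence S: "S \<subseteq> U" "card S = k" "A \<subseteq> S" "S \<inter> B = {}" by auto
    have fS: "finite S" using S(1) fU finite_subset by blast
    have "S - A \<in> ?T" using S fS fA by (auto simp: card_Diff_subset)
    moreover have "S = (S - A) \<union> A" using S by auto
    ultimately show "S \<in> (\<lambda>T. T \<union> A) ` ?T" by blast
  next
    fix S assume "S \<in> (\<lambda>T. T \<union> A) ` ?T"
    then obtain T where T: "T \<subseteq> U - A - B" "card T = k - card A" and ST: "S = T \<union> A" by auto
    have fT: "finite T" using T(1) fU finite_subset by blast
    have "card S = k" using ST T fT fA kA by (subst ST, subst card_Un_disjoint) auto
    thus "S \<in> {S. S \<subseteq> U \<and> card S = k \<and> A \<subseteq> S \<and> S \<inter> B = {}}" using ST T AU AB by auto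
  qed
  have inj: "inj_on (\<lambda>T. T \<union> A) ?T"
    by (rule inj_onI) blast
  have cUAB: "card (U - A - B) = card U - card A - card B"
  proof -
    have "B \<subseteq> U - A" using BU AB by blast
    hence "card (U - A - B) = card (U - A) - card B" using fB by (simp add: card_Diff_subset)
    thus ?thesis using AU fA by (simp add: card_Diff_subset)
  qed
  show ?thesis unfolding eq card_image[OF inj]
    using n_subsets[of "U - A - B" "k - card A"] fU cUAB by simp
qed

lemma sum_ind: "finite X \<Longrightarrow> (\<Sum>x\<in>X. (if P x then 1 else 0::real)) = real (card {x\<in>X. P x})"
  by (simp add: sum.If_cases Int_def conj_commute)

abbreviation Sk :: "nat set \<Rightarrow> nat \<Rightarrow> nat set set" where
  "Sk U k \<equiv> {S. S \<subseteq> U \<and> card S = k}"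

lemma finite_Sk: "finite U \<Longrightarrow> finite (Sk U k)"
  by (rule finite_subset[of _ "Pow U"]) auto

lemma c1:
  assumes fU: "finite U" and iU: "i \<in> U"
  shows "real (card U) * (\<Sum>S\<in>Sk U k. zvec S i) = real k * real (card U choose k)"
proof -
  have "(\<Sum>S\<in>Sk U k. zvec S i) = real (card {S\<in>Sk U k. i \<in> S})"
    unfolding zvec_def by (rule sum_ind[OF finite_Sk[OF fU]])
  also have "{S\<in>Sk U k. i \<in> S} = {S. S \<subseteq> U \<and> card S = k \<and> {i} \<subseteq> S \<and> S \<inter> {} = {}}" by auto
  finally have e: "(\<Sum>S\<in>Sk U k. zvec S i) = real (card {S. S \<subseteq> U \<and> card S = k \<and> {i} \<subseteq> S \<and> S \<inter> {} = {}})" .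
  show ?thesis
  proof (cases "k = 0")
    case True
    have z: "{S. S \<subseteq> U \<and> card S = k \<and> {i} \<subseteq> S \<and> S \<inter> {} = {}} = {}"
      using True fU by (auto dest: finite_subset)
    have "(\<Sum>S\<in>Sk U k. zvec S i) = 0" using e z by (metis card.empty of_nat_0)
    then show ?thesis using True by simp
  next
    case False
    have "card {S. S \<subseteq> U \<and> card S = k \<and> {i} \<subseteq> S \<and> S \<inter> {} = {}} = (card U - 1) choose (k - 1)"
      using count_gen[of U "{i}" "{}" k] fU iU False by simp
    moreover have "k * (card U choose k) = card U * ((card U - 1) choose (k - 1))"
      using times_binomial_minus1_eq[of k "card U"] False by simp
    ultimately show ?thesis using e by (metis of_nat_mult)
  qed
qed

lemma c2:
  assumes fU: "finite U" and iU: "i \<in> U" and jU: "j \<in> U" and ij: "i \<noteq> j"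
  shows "real (card U) * (real (card U) - 1) * (\<Sum>S\<in>Sk U k. zvec S i * zvec S j)
       = real k * (real k - 1) * real (card U choose k)"
proof -
  have "(\<Sum>S\<in>Sk U k. zvec S i * zvec S j) = (\<Sum>S\<in>Sk U k. (if i \<in> S \<and> j \<in> S then 1 else 0))"
    unfolding zvec_def by (rule sum.cong) auto
  also have "\<dots> = real (card {S\<in>Sk U k. i \<in> S \<and> j \<in> S})"
    by (rule sum_ind[OF finite_Sk[OF fU]])
  also have "{S\<in>Sk U k. i \<in> S \<and> j \<in> S} = {S. S \<subseteq> U \<and> card S = k \<and> {i,j} \<subseteq> S \<and> S \<inter> {} = {}}" by auto
  finally have e: "(\<Sum>S\<in>Sk U k. zvec S i * zvec S j) = real (card {S. S \<subseteq> U \<and> card S = k \<and> {i,j} \<subseteq> S \<and> S \<inter> {} = {}})" .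
  have cU: "card U \<ge> 2"
  proof -
    have "card {i,j} \<le> card U" using fU iU jU by (intro card_mono) auto
    thus ?thesis using ij by simp
  qed
  show ?thesis
  proof (cases "k < 2")
    case True
    have "{S. S \<subseteq> U \<and> card S = k \<and> {i,j} \<subseteq> S \<and> S \<inter> {} = {}} = {}"
    proof (rule ccontr)
      assume "\<not> ?thesis"
      then obtain S where S: "S \<subseteq> U" "card S = k" "{i,j} \<subseteq> S" by auto
      have "card {i,j} \<le> card S" using S fU by (intro card_mono) (auto dest: finite_subset)
      thus False using ij S True by simp
    qed
    hence "(\<Sum>S\<in>Sk U k. zvec S i * zvec S j) = 0" using e by (metis card.empty of_nat_0)
    moreover have "real k * (real k - 1) = 0" using True by (cases k) auto
    ultimately show ?thesis by simp
  next
    case False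
    have "card {S. S \<subseteq> U \<and> card S = k \<and> {i,j} \<subseteq> S \<and> S \<inter> {} = {}} = (card U - 2) choose (k - 2)"
      using count_gen[of U "{i,j}" "{}" k] fU iU jU False ij by (simp add: numeral_2_eq_2)
    moreover have "k * (card U choose k) = card U * ((card U - 1) choose (k - 1))"
      using times_binomial_minus1_eq[of k "card U"] False by simp
    moreover have "(k - 1) * ((card U - 1) choose (k - 1)) = (card U - 1) * ((card U - 1 - 1) choose (k - 1 - 1))"
      using times_binomial_minus1_eq[of "k - 1" "card U - 1"] False by simp
    ultimately have "k * (k - 1) * (card U choose k) = card U * (card U - 1) * card {S. S \<subseteq> U \<and> card S = k \<and> {i,j} \<subseteq> S \<and> S \<inter> {} = {}}"
      by (metis (no_types, lifting) diff_diff_left mult.assoc mult.left_commute one_add_one)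
    hence "real (k * (k - 1) * (card U choose k)) = real (card U * (card U - 1) * card {S. S \<subseteq> U \<and> card S = k \<and> {i,j} \<subseteq> S \<and> S \<inter> {} = {}})"
      by simp
    then show ?thesis using e False cU by (simp add: of_nat_diff)
  qed
qed

lemma card_Sk: "finite U \<Longrightarrow> card (Sk U k) = card U choose k"
  by (rule n_subsets)

lemma sum_z:
  assumes "S \<subseteq> {1..n}"
  shows "(\<Sum>i=1..n. zvec S i) = real (card S)"
proof -
  have "(\<Sum>i=1..n. zvec S i) = real (card {i\<in>{1..n}. i \<in> S})"
    unfolding zvec_def by (rule sum_ind) simp
  also have "{i\<in>{1..n}. i \<in> S} = S" using assms by auto
  finally show ?thesis .
qed

lemma alg_aux:
  fixes a b e C N D kk :: real
  assumes "N \<noteq> 0" "D \<noteq> 0"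
  shows "(a + b) * C / N + e * (kk - 1) * C / D - (a * C / N + e * kk * C / D) = C * (b / N - e / D)"
  using assms by (simp add: field_simps)

lemma per_k:
  fixes n :: nat and g :: "nat \<Rightarrow> nat \<Rightarrow> bool"
    and \<alpha> \<beta> :: "nat \<Rightarrow> real" and \<gamma> :: real
    and Y :: "nat \<Rightarrow> (nat \<Rightarrow> real) \<Rightarrow> real"
  assumes n2: "n \<ge> 2"
    and irr: "\<And>i. \<not> g i i"
    and Yd: "\<And>i z. Y i z = \<alpha> i + \<beta> i * z i + \<gamma> * (\<Sum>j=1..n. adj g i j * z j)"
    and k1: "1 \<le> k" and kn: "k < n"
  shows "(\<Sum>S\<in>Sk {1..n} k. beta_naive n Y S)
       = real (n choose k) * ((\<Sum>i=1..n. \<beta> i) / real n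
           - \<gamma> * (\<Sum>i=1..n. \<Sum>j=1..n. adj g i j) / (real n * (real n - 1)))"
proof -
  let ?U = "{1..n}"
  define C where "C = real (n choose k)"
  define c1 where "c1 = real k * C / real n"
  define c2 where "c2 = real k * (real k - 1) * C / (real n * (real n - 1))"
  define A where "A = (\<Sum>i=1..n. \<alpha> i)"
  define B where "B = (\<Sum>i=1..n. \<beta> i)"
  define G where "G = (\<Sum>i=1..n. \<Sum>j=1..n. adj g i j)"
  have fin: "finite (Sk ?U k)" by (rule finite_Sk) simp
  have npos: "real n > 0" "real n - 1 > 0" using n2 by auto
  have hc1: "(\<Sum>S\<in>Sk ?U k. zvec S i) = c1" if "i \<in> ?U" for i
    using c1[of ?U i k] that npos unfolding c1_def C_def by (simp add: field_simps)
  have hc2: "adj g i j * (\<Sum>S\<in>Sk ?U k. zvec S i * zvec S j) = adj g i j * c2"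
    if "i \<in> ?U" "j \<in> ?U" for i j
  proof (cases "i = j")
    case True then show ?thesis using irr by (simp add: adj_def)
  next
    case False
    have "(\<Sum>S\<in>Sk ?U k. zvec S i * zvec S j) = c2"
      using c2[of ?U i j k] that npos False unfolding c2_def C_def by (simp add: field_simps)
    then show ?thesis by simp
  qed
  have hC: "(\<Sum>S\<in>Sk ?U k. 1::real) = C" unfolding C_def using card_Sk[of ?U k] by simp
  have P_pt: "Y i (zvec S) * zvec S i = (\<alpha> i + \<beta> i) * zvec S i + \<gamma> * (\<Sum>j=1..n. adj g i j * (zvec S i * zvec S j))" for i S
    unfolding Yd by (cases "i \<in> S") (simp_all add: zvec_def)
  have Q_pt: "Y i (zvec S) * (1 - zvec S i) = \<alpha> i * (1 - zvec S i) + \<gamma> * (\<Sum>j=1..n. adj g i j * (zvec S j - zvec S i * zvec S j))" for i S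
    unfolding Yd by (cases "i \<in> S") (simp_all add: zvec_def)
  have P_i: "(\<Sum>S\<in>Sk ?U k. Y i (zvec S) * zvec S i) = (\<alpha> i + \<beta> i) * c1 + \<gamma> * (\<Sum>j=1..n. adj g i j) * c2"
    if "i \<in> ?U" for i
  proof -
    have "(\<Sum>S\<in>Sk ?U k. Y i (zvec S) * zvec S i)
        = (\<alpha> i + \<beta> i) * (\<Sum>S\<in>Sk ?U k. zvec S i) + \<gamma> * (\<Sum>j=1..n. adj g i j * (\<Sum>S\<in>Sk ?U k. zvec S i * zvec S j))"
      unfolding P_pt by (simp add: sum.distrib sum_distrib_left mult.assoc) (rule sum.swap)
    also have "\<dots> = (\<alpha> i + \<beta> i) * c1 + \<gamma> * (\<Sum>j=1..n. adj g i j * c2)"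
    proof -
      have "(\<Sum>j=1..n. adj g i j * (\<Sum>S\<in>Sk ?U k. zvec S i * zvec S j)) = (\<Sum>j=1..n. adj g i j * c2)"
        by (rule sum.cong[OF refl]) (rule hc2[OF that], simp)
      then show ?thesis using hc1[OF that] by simp
    qed
    finally show ?thesis by (simp add: sum_distrib_right mult.assoc)
  qed
  have Q_i: "(\<Sum>S\<in>Sk ?U k. Y i (zvec S) * (1 - zvec S i)) = \<alpha> i * (C - c1) + \<gamma> * (\<Sum>j=1..n. adj g i j) * (c1 - c2)"
    if "i \<in> ?U" for i
  proof -
    have "(\<Sum>S\<in>Sk ?U k. Y i (zvec S) * (1 - zvec S i))
        = \<alpha> i * ((\<Sum>S\<in>Sk ?U k. 1) - (\<Sum>S\<in>Sk ?U k. zvec S i)) + \<gamma> * (\<Sum>j=1..n. adj g i j * ((\<Sum>S\<in>Sk ?U k. zvec S j) - (\<Sum>S\<in>Sk ?U k. zvec S i * zvec S j)))"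
      unfolding Q_pt by (simp add: sum.distrib sum_subtractf sum_distrib_left right_diff_distrib mult.assoc) (simp only: sum.swap[of _ "Sk {Suc 0..n} k"])
    also have "\<dots> = \<alpha> i * (C - c1) + \<gamma> * (\<Sum>j=1..n. adj g i j * (c1 - c2))"
    proof -
      have "(\<Sum>j=1..n. adj g i j * ((\<Sum>S\<in>Sk ?U k. zvec S j) - (\<Sum>S\<in>Sk ?U k. zvec S i * zvec S j))) = (\<Sum>j=1..n. adj g i j * (c1 - c2))"
        proof (rule sum.cong[OF refl])
        fix j assume j: "j \<in> {1..n}"
        show "adj g i j * ((\<Sum>S\<in>Sk ?U k. zvec S j) - (\<Sum>S\<in>Sk ?U k. zvec S i * zvec S j)) = adj g i j * (c1 - c2)"
          using hc1[OF j] hc2[OF that j] by (simp add: right_diff_distrib)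
      qed
      then show ?thesis using hc1[OF that] hC by simp
    qed
    finally show ?thesis by (simp add: sum_distrib_right mult.assoc)
  qed
  have bn: "beta_naive n Y S = (\<Sum>i=1..n. Y i (zvec S) * zvec S i) / real k
       - (\<Sum>i=1..n. Y i (zvec S) * (1 - zvec S i)) / (real n - real k)" if "S \<in> Sk ?U k" for S
  proof -
    have "(\<Sum>i=1..n. zvec S i) = real k" using sum_z[of S n] that by simp
    moreover have "(\<Sum>i=1..n. (1 - zvec S i)) = real n - real k"
      using \<open>(\<Sum>i=1..n. zvec S i) = real k\<close> by (simp add: sum_subtractf)
    ultimately show ?thesis unfolding beta_naive_def Yobs_def by simp
  qed
  have "(\<Sum>S\<in>Sk ?U k. beta_naive n Y S)
      = (\<Sum>S\<in>Sk ?U k. (\<Sum>i=1..n. Y i (zvec S) * zvec S i) / real k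
       - (\<Sum>i=1..n. Y i (zvec S) * (1 - zvec S i)) / (real n - real k))"
    by (rule sum.cong[OF refl]) (rule bn)
  also have "\<dots> = (\<Sum>S\<in>Sk ?U k. \<Sum>i=1..n. Y i (zvec S) * zvec S i) / real k
       - (\<Sum>S\<in>Sk ?U k. \<Sum>i=1..n. Y i (zvec S) * (1 - zvec S i)) / (real n - real k)"
    by (simp only: sum_subtractf sum_divide_distrib)
  also have "\<dots> = (\<Sum>i=1..n. \<Sum>S\<in>Sk ?U k. Y i (zvec S) * zvec S i) / real k
       - (\<Sum>i=1..n. \<Sum>S\<in>Sk ?U k. Y i (zvec S) * (1 - zvec S i)) / (real n - real k)"
    by (simp only: sum.swap[of _ "Sk ?U k"])
  also have "\<dots> = (\<Sum>i=1..n. (\<alpha> i + \<beta> i) * c1 + \<gamma> * (\<Sum>j=1..n. adj g i j) * c2) / real k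
       - (\<Sum>i=1..n. \<alpha> i * (C - c1) + \<gamma> * (\<Sum>j=1..n. adj g i j) * (c1 - c2)) / (real n - real k)"
    using P_i Q_i by simp
  also have "\<dots> = ((A + B) * c1 + \<gamma> * G * c2) / real k - (A * (C - c1) + \<gamma> * G * (c1 - c2)) / (real n - real k)"
    unfolding A_def B_def G_def
    by (simp only: sum.distrib sum_distrib_right[symmetric] sum_distrib_left[symmetric] mult.assoc)
  also have "\<dots> = C * (B / real n - \<gamma> * G / (real n * (real n - 1)))"
  proof -
    have kp: "real k > 0" "real n - real k > 0" using k1 kn by auto
    have e1: "(A + B) * c1 / real k = (A + B) * C / real n" unfolding c1_def using kp by simp
    have e2: "\<gamma> * G * c2 / real k = \<gamma> * G * (real k - 1) * C / (real n * (real n - 1))"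
      unfolding c2_def using kp by simp
    have e3: "A * (C - c1) / (real n - real k) = A * C / real n"
    proof -
      have "C - c1 = (real n - real k) * C / real n" unfolding c1_def using npos by (simp add: field_simps)
      thus ?thesis using kp by simp
    qed
    have e4: "\<gamma> * G * (c1 - c2) / (real n - real k) = \<gamma> * G * real k * C / (real n * (real n - 1))"
    proof -
      have "c1 - c2 = real k * (real n - real k) * C / (real n * (real n - 1))"
        unfolding c1_def c2_def using npos by (simp add: field_simps)
      thus ?thesis using kp by simp
    qed
    have "((A + B) * c1 + \<gamma> * G * c2) / real k - (A * (C - c1) + \<gamma> * G * (c1 - c2)) / (real n - real k)
       = ((A + B) * c1 / real k + \<gamma> * G * c2 / real k) - (A * (C - c1) / (real n - real k) + \<gamma> * G * (c1 - c2) / (real n - real k))"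
      by (simp add: add_divide_distrib)
    also have "\<dots> = (A + B) * C / real n + \<gamma> * G * (real k - 1) * C / (real n * (real n - 1))
        - (A * C / real n + \<gamma> * G * real k * C / (real n * (real n - 1)))"
      by (simp only: e1 e2 e3 e4)
    also have "\<dots> = C * (B / real n - \<gamma> * G / (real n * (real n - 1)))"
      by (rule alg_aux) (use npos in auto)
    finally show ?thesis .
  qed
  finally show ?thesis unfolding C_def B_def G_def .
qed

lemma G_edges:
  assumes sg: "simple_graph_on n g"
  shows "(\<Sum>i=1..n. \<Sum>j=1..n. adj g i j) = 2 * real (num_edges n g)"
proof -
  let ?U = "{1..n}"
  define E where "E = {(i, j). i \<in> ?U \<and> j \<in> ?U \<and> i < j \<and> g i j}"
  have sym: "\<And>i j. g i j \<Longrightarrow> g j i" and irr: "\<And>i. \<not> g i i" using sg unfolding simple_graph_on_def by auto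
  have finE: "finite E" by (rule finite_subset[of _ "?U \<times> ?U"]) (auto simp: E_def)
  have "(\<Sum>i=1..n. \<Sum>j=1..n. adj g i j) = (\<Sum>x\<in>?U \<times> ?U. (if g (fst x) (snd x) then 1 else 0))"
    unfolding adj_def sum.cartesian_product by (simp add: case_prod_beta)
  also have "\<dots> = real (card {x\<in>?U \<times> ?U. g (fst x) (snd x)})" by (rule sum_ind) simp
  also have "{x\<in>?U \<times> ?U. g (fst x) (snd x)} = E \<union> prod.swap ` E"
  proof (intro set_eqI iffI)
    fix x assume x: "x \<in> {x\<in>?U \<times> ?U. g (fst x) (snd x)}"
    obtain i j where ij: "x = (i, j)" by (cases x)
    have "i \<noteq> j" using x ij irr by auto
    then consider "i < j" | "j < i" by linarith
    then show "x \<in> E \<union> prod.swap ` E"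
    proof cases
      case 1 then show ?thesis using x ij by (auto simp: E_def)
    next
      case 2
      have "(j, i) \<in> E" using x ij 2 sym by (auto simp: E_def)
      hence "prod.swap (j, i) \<in> prod.swap ` E" by blast
      then show ?thesis using ij by simp
    qed
  next
    fix x assume "x \<in> E \<union> prod.swap ` E"
    then show "x \<in> {x\<in>?U \<times> ?U. g (fst x) (snd x)}" using sym by (auto simp: E_def)
  qed
  also have "card (E \<union> prod.swap ` E) = card E + card (prod.swap ` E)"
    by (rule card_Un_disjoint) (use finE in \<open>auto simp: E_def\<close>)
  also have "card (prod.swap ` E) = card E" by (rule card_image) (auto simp: inj_on_def)
  finally show ?thesis unfolding num_edges_def E_def by simp
qed

lemma binom_sum:
  fixes p :: real and n :: nat
  assumes n2: "n \<ge> 2" and p0: "0 < p" and p1: "p < 1"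
  shows "(\<Sum>k\<in>{1..<n}. real (n choose k) * p ^ k * (1 - p) ^ (n - k)) = 1 - p ^ n - (1 - p) ^ n"
    and "1 - p ^ n - (1 - p) ^ n > 0"
proof -
  define t where "t k = real (n choose k) * p ^ k * (1 - p) ^ (n - k)" for k
  have "(\<Sum>k\<le>n. t k) = (p + (1 - p)) ^ n" unfolding t_def by (rule binomial_ring[symmetric])
  hence tot: "(\<Sum>k\<le>n. t k) = 1" by simp
  have eq: "{..n} = insert 0 (insert n {1..<n})" using n2 by auto
  have "(\<Sum>k\<le>n. t k) = t 0 + (t n + (\<Sum>k\<in>{1..<n}. t k))"
    unfolding eq using n2 by (simp add: sum.insert)
  moreover have "t 0 = (1 - p) ^ n" "t n = p ^ n" unfolding t_def by auto
  ultimately show s: "(\<Sum>k\<in>{1..<n}. real (n choose k) * p ^ k * (1 - p) ^ (n - k)) = 1 - p ^ n - (1 - p) ^ n"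
    using tot unfolding t_def by simp
  have "(\<Sum>k\<in>{1..<n}. real (n choose k) * p ^ k * (1 - p) ^ (n - k)) > 0"
    by (rule sum_pos) (use n2 p0 p1 in auto)
  then show "1 - p ^ n - (1 - p) ^ n > 0" using s by simp
qed

theorem proposition13:
  fixes n :: nat and g :: "nat \<Rightarrow> nat \<Rightarrow> bool"
    and \<alpha> \<beta> :: "nat \<Rightarrow> real" and \<gamma> p :: real
    and Y :: "nat \<Rightarrow> (nat \<Rightarrow> real) \<Rightarrow> real"
  assumes "n \<ge> 2"
    and "simple_graph_on n g"
    and "\<And>i z. Y i z = \<alpha> i + \<beta> i * z i + \<gamma> * (\<Sum>j=1..n. adj g i j * z j)"
    and "0 < p" and "p < 1"
  shows "rb_expect n p (beta_naive n Y) - DTE n Y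
           = - \<gamma> * (2 * real (num_edges n g)) / (real n * (real n - 1))
         \<and> DTE n Y = (1 / real n) * (\<Sum>i=1..n. \<beta> i)"
proof -
  note n2 = assms(1) and sg = assms(2) and Yd = assms(3) and p0 = assms(4) and p1 = assms(5)
  have irr: "\<And>i. \<not> g i i" using sg unfolding simple_graph_on_def by auto
  let ?U = "{1..n}"
  define B where "B = (\<Sum>i=1..n. \<beta> i)"
  define G where "G = (\<Sum>i=1..n. \<Sum>j=1..n. adj g i j)"
  define K where "K = B / real n - \<gamma> * G / (real n * (real n - 1))"
  define D where "D = 1 - p ^ n - (1 - p) ^ n"
  have Dpos: "D > 0" and Dsum: "(\<Sum>k\<in>{1..<n}. real (n choose k) * p ^ k * (1 - p) ^ (n - k)) = D"
    using binom_sum[OF n2 p0 p1] unfolding D_def by auto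
  have dte: "DTE n Y = (1 / real n) * B"
  proof -
    have "Y i (zvec {i}) - Y i (zvec {}) = \<beta> i" for i
    proof -
      have "(\<Sum>j=1..n. adj g i j * zvec {i} j) = (\<Sum>j=1..n. 0)"
        by (rule sum.cong[OF refl]) (auto simp: zvec_def adj_def irr)
      thus ?thesis unfolding Yd by (simp add: zvec_def)
    qed
    thus ?thesis unfolding DTE_def B_def by simp
  qed
  have "rb_expect n p (beta_naive n Y) = (\<Sum>k\<in>{0..n}. \<Sum>S\<in>Sk ?U k. rb_prob n p S * beta_naive n Y S)"
    unfolding rb_expect_def
  proof (rule sum.group[symmetric, where g = card, THEN trans])
    show "finite (Pow ?U)" by simp
    show "finite {0..n}" by simp
    show "card ` Pow ?U \<subseteq> {0..n}" using card_mono[of ?U] by auto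
    show "(\<Sum>k\<in>{0..n}. \<Sum>S\<in>{x \<in> Pow ?U. card x = k}. rb_prob n p S * beta_naive n Y S)
        = (\<Sum>k\<in>{0..n}. \<Sum>S\<in>Sk ?U k. rb_prob n p S * beta_naive n Y S)"
      by (rule sum.cong[OF refl], rule sum.cong) auto
  qed
  also have "\<dots> = (\<Sum>k\<in>{0..n}. if 0 < k \<and> k < n then p ^ k * (1 - p) ^ (n - k) / D * (\<Sum>S\<in>Sk ?U k. beta_naive n Y S) else 0)"
  proof (rule sum.cong[OF refl])
    fix k assume "k \<in> {0..n}"
    have "(\<Sum>S\<in>Sk ?U k. rb_prob n p S * beta_naive n Y S)
        = (\<Sum>S\<in>Sk ?U k. (if 0 < k \<and> k < n then p ^ k * (1 - p) ^ (n - k) / D else 0) * beta_naive n Y S)"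
      by (rule sum.cong[OF refl]) (auto simp: rb_prob_def D_def)
    also have "\<dots> = (if 0 < k \<and> k < n then p ^ k * (1 - p) ^ (n - k) / D * (\<Sum>S\<in>Sk ?U k. beta_naive n Y S) else 0)"
      by (simp add: sum_distrib_left)
    finally show "(\<Sum>S\<in>Sk ?U k. rb_prob n p S * beta_naive n Y S) = \<dots>" .
  qed
  also have "\<dots> = (\<Sum>k\<in>{1..<n}. p ^ k * (1 - p) ^ (n - k) / D * (\<Sum>S\<in>Sk ?U k. beta_naive n Y S))"
    by (rule sum.mono_neutral_cong_right) auto
  also have "\<dots> = (\<Sum>k\<in>{1..<n}. real (n choose k) * p ^ k * (1 - p) ^ (n - k) * (K / D))"
  proof (rule sum.cong[OF refl])
    fix k assume k: "k \<in> {1..<n}"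
    have "(\<Sum>S\<in>Sk ?U k. beta_naive n Y S) = real (n choose k) * K"
      unfolding K_def B_def G_def by (rule per_k[OF n2 irr Yd]) (use k in auto)
    thus "p ^ k * (1 - p) ^ (n - k) / D * (\<Sum>S\<in>Sk ?U k. beta_naive n Y S)
        = real (n choose k) * p ^ k * (1 - p) ^ (n - k) * (K / D)" by simp
  qed
  also have "\<dots> = D * (K / D)" by (simp only: sum_distrib_right[symmetric] Dsum)
  also have "\<dots> = K" using Dpos by simp
  finally have E: "rb_expect n p (beta_naive n Y) = K" .
  have Gm: "G = 2 * real (num_edges n g)" unfolding G_def by (rule G_edges[OF sg])
  show ?thesis
    unfolding E dte K_def Gm[symmetric] B_def by (simp add: field_simps)
qed

end
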